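(* Let $\phi$ be a circuit all of whose constraints $F_v$ are even-windable. Then the signature $[\![\phi]\!]$ is even-windable.
   Context: For $x,y\in\{0,1\}^J$, $x\oplus y$ is coordinatewise addition mod 2, and $\mathbf S$ is the characteristic vector of $S\subseteq J$. For $z\in\{0,1\}^J$, $\mathrm{Match}(z)$ is the set of partitions of $\{i:z_i=1\}$ into pairs. $F:\{0,1\}^J\to\mathbb{Q}_{\ge0}$ is even-windable if there exist $B(x,y,M)\ge0$ for all $x,y\in\{0,1\}^J$, $M\in\mathrm{Match}(x\oplus y)$, with (EW1) $F(x)F(y)=\sum_{M\in\mathrm{Match}(x\oplus y)}B(x,y,M)$ for all $x,y$, and (EW2) $B(x,y,M)=B(x\oplus\mathbf S,y\oplus\mathbf S,M)$ for all $x,y$ and all $S\in M\in\mathrm{Match}(x\oplus y)$. A circuit $\phi$ consists of: a finite set $J$ of incidences; a finite set $V$ of vertices with sets $J_v$ partitioning $J$; a set $A\subseteq J$ of external edges; a partition $E$ of $J\setminus A$ into pairs (internal edges); and constraints $F_v:\{0,1\}^{J_v}\to\mathbb{Q}_{\ge0}$. An assignment is $x\in\{0,1\}^J$ with $x_i=x_j$ for all $\{i,j\}\in E$; $\mathrm{wt}_\phi(x)=\prod_vF_v(x|_{J_v})$; the signature is $[\![\phi]\!]:\{0,1\}^A\to\mathbb{Q}_{\ge0}$, $[\![\phi]\!](x)=\sum\mathrm{wt}_\phi(x')$ over assignments $x'$ extending $x$. *)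

theory Defs
  imports Complex_Main
begin

text \<open>Elements of {0,1}^J are represented by subsets of J (the support);
  coordinatewise addition mod 2 is symmetric difference, and the
  characteristic vector of S is S itself.\<close>

definition xorset :: "'j set \<Rightarrow> 'j set \<Rightarrow> 'j set" (infixl "\<oplus>\<^sub>s" 65) where
  "x \<oplus>\<^sub>s y = (x - y) \<union> (y - x)"

definition Match :: "'j set \<Rightarrow> 'j set set set" where
  "Match z = {M. (\<forall>S\<in>M. card S = 2) \<and> \<Union>M = z \<and>
                 (\<forall>S\<in>M. \<forall>T\<in>M. S \<noteq> T \<longrightarrow> S \<inter> T = {})}"

definition even_windable :: "'j set \<Rightarrow> ('j set \<Rightarrow> rat) \<Rightarrow> bool" where
  "even_windable J F \<longleftrightarrow>
    (\<exists>B :: 'j set \<Rightarrow> 'j set \<Rightarrow> 'j set set \<Rightarrow> rat.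
       (\<forall>x y M. x \<subseteq> J \<longrightarrow> y \<subseteq> J \<longrightarrow> M \<in> Match (x \<oplus>\<^sub>s y) \<longrightarrow> B x y M \<ge> 0) \<and>
       (\<forall>x y. x \<subseteq> J \<longrightarrow> y \<subseteq> J \<longrightarrow>
          F x * F y = (\<Sum>M\<in>Match (x \<oplus>\<^sub>s y). B x y M)) \<and>
       (\<forall>x y M S. x \<subseteq> J \<longrightarrow> y \<subseteq> J \<longrightarrow> M \<in> Match (x \<oplus>\<^sub>s y) \<longrightarrow> S \<in> M \<longrightarrow>
          B x y M = B (x \<oplus>\<^sub>s S) (y \<oplus>\<^sub>s S) M))"

text \<open>A circuit: incidences J, vertices V with incidence sets Jv v partitioning J,
  external edges A \<subseteq> J, internal edges E a partition of J - A into pairs,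
  and nonnegative constraints F v on {0,1}^(Jv v).\<close>
definition circuit ::
  "'j set \<Rightarrow> 'v set \<Rightarrow> ('v \<Rightarrow> 'j set) \<Rightarrow> 'j set \<Rightarrow> 'j set set \<Rightarrow> ('v \<Rightarrow> 'j set \<Rightarrow> rat) \<Rightarrow> bool" where
  "circuit J V Jv A E F \<longleftrightarrow>
     finite J \<and> finite V \<and>
     (\<forall>v\<in>V. Jv v \<subseteq> J) \<and> (\<Union>v\<in>V. Jv v) = J \<and>
     (\<forall>v\<in>V. \<forall>w\<in>V. v \<noteq> w \<longrightarrow> Jv v \<inter> Jv w = {}) \<and>
     A \<subseteq> J \<and> E \<in> Match (J - A) \<and>
     (\<forall>v\<in>V. \<forall>x. x \<subseteq> Jv v \<longrightarrow> F v x \<ge> 0)"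

definition assignments :: "'j set \<Rightarrow> 'j set set \<Rightarrow> 'j set set" where
  "assignments J E = {x. x \<subseteq> J \<and> (\<forall>i j. {i, j} \<in> E \<longrightarrow> (i \<in> x \<longleftrightarrow> j \<in> x))}"

definition wt :: "'v set \<Rightarrow> ('v \<Rightarrow> 'j set) \<Rightarrow> ('v \<Rightarrow> 'j set \<Rightarrow> rat) \<Rightarrow> 'j set \<Rightarrow> rat" where
  "wt V Jv F x = (\<Prod>v\<in>V. F v (x \<inter> Jv v))"

definition signature ::
  "'j set \<Rightarrow> 'v set \<Rightarrow> ('v \<Rightarrow> 'j set) \<Rightarrow> 'j set \<Rightarrow> 'j set set \<Rightarrow> ('v \<Rightarrow> 'j set \<Rightarrow> rat) \<Rightarrow> 'j set \<Rightarrow> rat" where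
  "signature J V Jv A E F x = (\<Sum>x'\<in>{x' \<in> assignments J E. x' \<inter> A = x}. wt V Jv F x')"

end

theory Submission
  imports Defs
begin

lemma xor_simp: "x \<oplus>\<^sub>s y = (x - y) \<union> (y - x)" by (simp add: xorset_def)

lemma Match_sub: "M \<in> Match Z \<Longrightarrow> M \<subseteq> Pow Z"
  unfolding Match_def by auto

lemma finite_Match: "finite Z \<Longrightarrow> finite (Match Z)"
  by (meson Match_sub finite_Pow_iff finite_subset subsetI PowI)

lemma Match_empty: "Match {} = {{}}"
  unfolding Match_def apply auto by (metis card.empty zero_neq_numeral)

definition EWB :: "'j set \<Rightarrow> ('j set \<Rightarrow> rat) \<Rightarrow> ('j set \<Rightarrow> 'j set \<Rightarrow> 'j set set \<Rightarrow> rat) \<Rightarrow> bool" where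
  "EWB J F B \<longleftrightarrow>
       (\<forall>x y M. x \<subseteq> J \<longrightarrow> y \<subseteq> J \<longrightarrow> M \<in> Match (x \<oplus>\<^sub>s y) \<longrightarrow> B x y M \<ge> 0) \<and>
       (\<forall>x y. x \<subseteq> J \<longrightarrow> y \<subseteq> J \<longrightarrow>
          F x * F y = (\<Sum>M\<in>Match (x \<oplus>\<^sub>s y). B x y M)) \<and>
       (\<forall>x y M S. x \<subseteq> J \<longrightarrow> y \<subseteq> J \<longrightarrow> M \<in> Match (x \<oplus>\<^sub>s y) \<longrightarrow> S \<in> M \<longrightarrow>
          B x y M = B (x \<oplus>\<^sub>s S) (y \<oplus>\<^sub>s S) M)"

lemma ew_iff: "even_windable J F \<longleftrightarrow> (\<exists>B. EWB J F B)"
  unfolding even_windable_def EWB_def by (rule refl)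

lemma EWB_nonneg: "EWB J F B \<Longrightarrow> x \<subseteq> J \<Longrightarrow> y \<subseteq> J \<Longrightarrow> M \<in> Match (x \<oplus>\<^sub>s y) \<Longrightarrow> B x y M \<ge> 0"
  unfolding EWB_def by simp
lemma EWB_eq: "EWB J F B \<Longrightarrow> x \<subseteq> J \<Longrightarrow> y \<subseteq> J \<Longrightarrow> F x * F y = (\<Sum>M\<in>Match (x \<oplus>\<^sub>s y). B x y M)"
  unfolding EWB_def by simp
lemma EWB_inv: "EWB J F B \<Longrightarrow> x \<subseteq> J \<Longrightarrow> y \<subseteq> J \<Longrightarrow> M \<in> Match (x \<oplus>\<^sub>s y) \<Longrightarrow> S \<in> M \<Longrightarrow>
          B x y M = B (x \<oplus>\<^sub>s S) (y \<oplus>\<^sub>s S) M"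
  unfolding EWB_def by simp
lemma EWB_intro:
  assumes "\<And>x y M. x \<subseteq> J \<Longrightarrow> y \<subseteq> J \<Longrightarrow> M \<in> Match (x \<oplus>\<^sub>s y) \<Longrightarrow> B x y M \<ge> 0"
    and "\<And>x y. x \<subseteq> J \<Longrightarrow> y \<subseteq> J \<Longrightarrow> F x * F y = (\<Sum>M\<in>Match (x \<oplus>\<^sub>s y). B x y M)"
    and "\<And>x y M S. x \<subseteq> J \<Longrightarrow> y \<subseteq> J \<Longrightarrow> M \<in> Match (x \<oplus>\<^sub>s y) \<Longrightarrow> S \<in> M \<Longrightarrow>
          B x y M = B (x \<oplus>\<^sub>s S) (y \<oplus>\<^sub>s S) M"
  shows "even_windable J F"
  unfolding ew_iff EWB_def using assms by blast

lemma ew_cong: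
  assumes "even_windable J F" "\<And>x. x \<subseteq> J \<Longrightarrow> F x = G x"
  shows "even_windable J G"
proof -
  obtain B where B: "EWB J F B" using assms(1) ew_iff by blast
  show ?thesis
  proof (rule EWB_intro)
    fix x y M S assume "x \<subseteq> J" "y \<subseteq> J"
    then show "G x * G y = (\<Sum>M\<in>Match (x \<oplus>\<^sub>s y). B x y M)"
      using EWB_eq[OF B] assms(2) by metis
    show "M \<in> Match (x \<oplus>\<^sub>s y) \<Longrightarrow> 0 \<le> B x y M" using EWB_nonneg[OF B] \<open>x \<subseteq> J\<close> \<open>y \<subseteq> J\<close> by blast
    show "M \<in> Match (x \<oplus>\<^sub>s y) \<Longrightarrow> S \<in> M \<Longrightarrow> B x y M = B (x \<oplus>\<^sub>s S) (y \<oplus>\<^sub>s S) M"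
      using EWB_inv[OF B] \<open>x \<subseteq> J\<close> \<open>y \<subseteq> J\<close> by blast
  qed
qed
lemma ew_empty: "even_windable {} (\<lambda>x. 1)"
  unfolding even_windable_def
  by (rule exI[of _ "\<lambda>x y M. 1"]) (auto simp: Match_empty xor_simp)

lemma Match_restrict:
  assumes "M \<in> Match Z" "\<forall>S\<in>M. S \<subseteq> J1 \<or> S \<subseteq> J2" "J1 \<inter> J2 = {}"
  shows "{S\<in>M. S \<subseteq> J1} \<in> Match (Z \<inter> J1)"
proof -
  have a: "\<forall>S\<in>M. card S = 2" "\<Union>M = Z" "\<forall>S\<in>M. \<forall>T\<in>M. S \<noteq> T \<longrightarrow> S \<inter> T = {}"
    using assms(1) unfolding Match_def by auto
  have "\<Union>{S\<in>M. S \<subseteq> J1} = Z \<inter> J1"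
  proof
    show "\<Union>{S\<in>M. S \<subseteq> J1} \<subseteq> Z \<inter> J1" using a(2) by blast
    show "Z \<inter> J1 \<subseteq> \<Union>{S\<in>M. S \<subseteq> J1}"
    proof
      fix z assume z: "z \<in> Z \<inter> J1"
      then obtain S where S: "S \<in> M" "z \<in> S" using a(2) by blast
      have "S \<subseteq> J1" using assms(2,3) S z by blast
      then show "z \<in> \<Union>{S\<in>M. S \<subseteq> J1}" using S by blast
    qed
  qed
  then show ?thesis using a unfolding Match_def by auto
qed
lemma Match_union:
  assumes "M1 \<in> Match Z1" "M2 \<in> Match Z2" "Z1 \<inter> Z2 = {}"
  shows "M1 \<union> M2 \<in> Match (Z1 \<union> Z2)"
proof -
  have a: "\<forall>S\<in>M1. card S = 2" "\<Union>M1 = Z1" "\<forall>S\<in>M1. \<forall>T\<in>M1. S \<noteq> T \<longrightarrow> S \<inter> T = {}"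
    using assms(1) unfolding Match_def by auto
  have b: "\<forall>S\<in>M2. card S = 2" "\<Union>M2 = Z2" "\<forall>S\<in>M2. \<forall>T\<in>M2. S \<noteq> T \<longrightarrow> S \<inter> T = {}"
    using assms(2) unfolding Match_def by auto
  have c: "S \<inter> T = {}" if "S \<in> M1" "T \<in> M2" for S T
    using that a(2) b(2) assms(3) by blast
  show ?thesis unfolding Match_def
  proof (intro CollectI conjI ballI impI)
    fix S assume "S \<in> M1 \<union> M2" then show "card S = 2" using a(1) b(1) by blast
  next
    show "\<Union>(M1 \<union> M2) = Z1 \<union> Z2" using a(2) b(2) by blast
  next
    fix S T assume "S \<in> M1 \<union> M2" "T \<in> M1 \<union> M2" "S \<noteq> T"
    then show "S \<inter> T = {}" using a(3) b(3) c by (metis Int_commute Un_iff)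
  qed
qed

lemma card2_ne: "card S = 2 \<Longrightarrow> S \<noteq> {}" by auto

lemma tensor:
  assumes e1: "even_windable J1 F1" and e2: "even_windable J2 F2"
    and d: "J1 \<inter> J2 = {}" and fin: "finite J1" "finite J2"
  shows "even_windable (J1 \<union> J2) (\<lambda>x. F1 (x \<inter> J1) * F2 (x \<inter> J2))"
proof -
  obtain B1 where B1: "EWB J1 F1 B1" using e1 ew_iff by blast
  obtain B2 where B2: "EWB J2 F2 B2" using e2 ew_iff by blast
  note B1n = EWB_nonneg[OF B1] and B1e = EWB_eq[OF B1] and B1i = EWB_inv[OF B1]
  note B2n = EWB_nonneg[OF B2] and B2e = EWB_eq[OF B2] and B2i = EWB_inv[OF B2]
  define NC where "NC M \<longleftrightarrow> (\<forall>S\<in>M. S \<subseteq> J1 \<or> S \<subseteq> J2)" for M :: "'a set set"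
  define B where "B x y M = (if NC M then B1 (x \<inter> J1) (y \<inter> J1) {S\<in>M. S \<subseteq> J1} *
      B2 (x \<inter> J2) (y \<inter> J2) {S\<in>M. S \<subseteq> J2} else 0)" for x y M
  have xi: "(x \<inter> K) \<oplus>\<^sub>s (y \<inter> K) = (x \<oplus>\<^sub>s y) \<inter> K" for x y K :: "'a set"
    by (auto simp: xor_simp)
  have d': "J2 \<inter> J1 = {}" using d by blast
  have NC': "NC M \<Longrightarrow> \<forall>S\<in>M. S \<subseteq> J2 \<or> S \<subseteq> J1" for M unfolding NC_def by blast
  show ?thesis
  proof (rule EWB_intro[where B=B])
    fix x y M assume x: "x \<subseteq> J1 \<union> J2" and y: "y \<subseteq> J1 \<union> J2" and M: "M \<in> Match (x \<oplus>\<^sub>s y)"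
    show "0 \<le> B x y M"
    proof (cases "NC M")
      case True
      have m1: "{S\<in>M. S \<subseteq> J1} \<in> Match ((x \<inter> J1) \<oplus>\<^sub>s (y \<inter> J1))"
        using Match_restrict[OF M True[unfolded NC_def] d] xi by simp
      have m2: "{S\<in>M. S \<subseteq> J2} \<in> Match ((x \<inter> J2) \<oplus>\<^sub>s (y \<inter> J2))"
        using Match_restrict[OF M NC'[OF True] d'] xi by simp
      have "0 \<le> B1 (x \<inter> J1) (y \<inter> J1) {S\<in>M. S \<subseteq> J1}" using B1n m1 by (meson inf_le2)
      moreover have "0 \<le> B2 (x \<inter> J2) (y \<inter> J2) {S\<in>M. S \<subseteq> J2}" using B2n m2 by (meson inf_le2)
      ultimately show ?thesis using True unfolding B_def by simp
    qed (simp add: B_def)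
  next
    fix x y M S assume x: "x \<subseteq> J1 \<union> J2" and y: "y \<subseteq> J1 \<union> J2" and M: "M \<in> Match (x \<oplus>\<^sub>s y)"
      and S: "S \<in> M"
    show "B x y M = B (x \<oplus>\<^sub>s S) (y \<oplus>\<^sub>s S) M"
    proof (cases "NC M")
      case True
      have m1: "{S\<in>M. S \<subseteq> J1} \<in> Match ((x \<inter> J1) \<oplus>\<^sub>s (y \<inter> J1))"
        using Match_restrict[OF M True[unfolded NC_def] d] xi by simp
      have m2: "{S\<in>M. S \<subseteq> J2} \<in> Match ((x \<inter> J2) \<oplus>\<^sub>s (y \<inter> J2))"
        using Match_restrict[OF M NC'[OF True] d'] xi by simp
      have "S \<subseteq> J1 \<or> S \<subseteq> J2" using True S unfolding NC_def by blast
      then show ?thesis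
      proof
        assume S1: "S \<subseteq> J1"
        have a: "(x \<oplus>\<^sub>s S) \<inter> J1 = (x \<inter> J1) \<oplus>\<^sub>s S" "(y \<oplus>\<^sub>s S) \<inter> J1 = (y \<inter> J1) \<oplus>\<^sub>s S"
          using S1 by (auto simp: xor_simp)
        have b: "(x \<oplus>\<^sub>s S) \<inter> J2 = x \<inter> J2" "(y \<oplus>\<^sub>s S) \<inter> J2 = y \<inter> J2"
          using S1 d by (auto simp: xor_simp)
        have "B1 (x \<inter> J1) (y \<inter> J1) {S\<in>M. S \<subseteq> J1} = B1 ((x \<inter> J1) \<oplus>\<^sub>s S) ((y \<inter> J1) \<oplus>\<^sub>s S) {S\<in>M. S \<subseteq> J1}"
          by (rule B1i[OF inf_le2 inf_le2 m1]) (use S S1 in blast)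
        then show ?thesis unfolding B_def using True a b by simp
      next
        assume S1: "S \<subseteq> J2"
        have a: "(x \<oplus>\<^sub>s S) \<inter> J2 = (x \<inter> J2) \<oplus>\<^sub>s S" "(y \<oplus>\<^sub>s S) \<inter> J2 = (y \<inter> J2) \<oplus>\<^sub>s S"
          using S1 by (auto simp: xor_simp)
        have b: "(x \<oplus>\<^sub>s S) \<inter> J1 = x \<inter> J1" "(y \<oplus>\<^sub>s S) \<inter> J1 = y \<inter> J1"
          using S1 d by (auto simp: xor_simp)
        have "B2 (x \<inter> J2) (y \<inter> J2) {S\<in>M. S \<subseteq> J2} = B2 ((x \<inter> J2) \<oplus>\<^sub>s S) ((y \<inter> J2) \<oplus>\<^sub>s S) {S\<in>M. S \<subseteq> J2}"
          by (rule B2i[OF inf_le2 inf_le2 m2]) (use S S1 in blast)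
        then show ?thesis unfolding B_def using True a b by simp
      qed
    qed (simp add: B_def)
  next
    fix x y assume x: "x \<subseteq> J1 \<union> J2" and y: "y \<subseteq> J1 \<union> J2"
    define Z where "Z = x \<oplus>\<^sub>s y"
    have finZ: "finite Z" unfolding Z_def using x y fin by (auto simp: xor_simp intro: finite_subset)
    have Zs: "Z \<subseteq> J1 \<union> J2" unfolding Z_def using x y by (auto simp: xor_simp)
    have "F1 (x \<inter> J1) * F2 (x \<inter> J2) * (F1 (y \<inter> J1) * F2 (y \<inter> J2))
        = (F1 (x \<inter> J1) * F1 (y \<inter> J1)) * (F2 (x \<inter> J2) * F2 (y \<inter> J2))" by (simp add: algebra_simps)
    also have "\<dots> = (\<Sum>M1\<in>Match (Z \<inter> J1). B1 (x \<inter> J1) (y \<inter> J1) M1) * (\<Sum>M2\<in>Match (Z \<inter> J2). B2 (x \<inter> J2) (y \<inter> J2) M2)"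
      using B1e[of "x \<inter> J1" "y \<inter> J1"] B2e[of "x \<inter> J2" "y \<inter> J2"] xi unfolding Z_def by simp
    also have "\<dots> = (\<Sum>p\<in>Match (Z \<inter> J1) \<times> Match (Z \<inter> J2). B1 (x \<inter> J1) (y \<inter> J1) (fst p) * B2 (x \<inter> J2) (y \<inter> J2) (snd p))"
      by (simp add: sum_product sum.cartesian_product case_prod_beta)
    also have "\<dots> = (\<Sum>M\<in>{M\<in>Match Z. NC M}. B x y M)"
    proof (rule sum.reindex_bij_witness[where i="\<lambda>M. ({S\<in>M. S \<subseteq> J1}, {S\<in>M. S \<subseteq> J2})" and j="\<lambda>p. fst p \<union> snd p"])
      fix p assume p: "p \<in> Match (Z \<inter> J1) \<times> Match (Z \<inter> J2)"
      then have p1: "fst p \<in> Match (Z \<inter> J1)" and p2: "snd p \<in> Match (Z \<inter> J2)" by auto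
      have s1: "\<forall>S\<in>fst p. S \<subseteq> J1 \<and> card S = 2" using p1 unfolding Match_def by auto
      have s2: "\<forall>S\<in>snd p. S \<subseteq> J2 \<and> card S = 2" using p2 unfolding Match_def by auto
      have n1: "\<not> S \<subseteq> J2" if "S \<in> fst p" for S using s1 that d card2_ne by blast
      have n2: "\<not> S \<subseteq> J1" if "S \<in> snd p" for S using s2 that d card2_ne by blast
      have e1: "{S\<in>fst p \<union> snd p. S \<subseteq> J1} = fst p" using s1 n2 by blast
      have e2: "{S\<in>fst p \<union> snd p. S \<subseteq> J2} = snd p" using s2 n1 by blast
      show "({S\<in>fst p \<union> snd p. S \<subseteq> J1}, {S\<in>fst p \<union> snd p. S \<subseteq> J2}) = p"
        using e1 e2 by simp
      have u: "fst p \<union> snd p \<in> Match (Z \<inter> J1 \<union> Z \<inter> J2)"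
        by (rule Match_union[OF p1 p2]) (use d in blast)
      have "Z \<inter> J1 \<union> Z \<inter> J2 = Z" using Zs by blast
      then have u': "fst p \<union> snd p \<in> Match Z" using u by simp
      have nc: "NC (fst p \<union> snd p)" unfolding NC_def using s1 s2 by blast
      show "fst p \<union> snd p \<in> {M\<in>Match Z. NC M}" using u' nc by simp
      show "B x y (fst p \<union> snd p) = B1 (x \<inter> J1) (y \<inter> J1) (fst p) * B2 (x \<inter> J2) (y \<inter> J2) (snd p)"
        unfolding B_def using nc e1 e2 by simp
    next
      fix M assume M: "M \<in> {M\<in>Match Z. NC M}"
      then have M': "M \<in> Match Z" "NC M" by auto
      show "fst ({S\<in>M. S \<subseteq> J1}, {S\<in>M. S \<subseteq> J2}) \<union> snd ({S\<in>M. S \<subseteq> J1}, {S\<in>M. S \<subseteq> J2}) = M"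
        using M'(2) unfolding NC_def by auto
      show "({S\<in>M. S \<subseteq> J1}, {S\<in>M. S \<subseteq> J2}) \<in> Match (Z \<inter> J1) \<times> Match (Z \<inter> J2)"
        using Match_restrict[OF M'(1) M'(2)[unfolded NC_def] d] Match_restrict[OF M'(1) NC'[OF M'(2)] d'] by simp
    qed
    also have "\<dots> = (\<Sum>M\<in>Match Z. B x y M)"
      by (rule sum.mono_neutral_left) (auto simp: B_def finite_Match finZ)
    finally show "F1 (x \<inter> J1) * F2 (x \<inter> J2) * (F1 (y \<inter> J1) * F2 (y \<inter> J2)) = (\<Sum>M\<in>Match (x \<oplus>\<^sub>s y). B x y M)"
      unfolding Z_def .
  qed
qed

definition red :: "'j set \<Rightarrow> 'j set set \<Rightarrow> 'j set set" where
  "red e M = {S\<in>M. S \<inter> e = {}} \<union>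
     (if \<Union>{S\<in>M. S \<inter> e \<noteq> {}} - e = {} then {} else {\<Union>{S\<in>M. S \<inter> e \<noteq> {}} - e})"

lemma card2_pick: "card P = 2 \<Longrightarrow> i \<in> P \<Longrightarrow> \<exists>p. p \<noteq> i \<and> P = {i, p}"
  by (auto simp: card_2_iff)

lemma card2_eq: "card P = 2 \<Longrightarrow> i \<in> P \<Longrightarrow> j \<in> P \<Longrightarrow> i \<noteq> j \<Longrightarrow> P = {i, j}"
  by (auto simp: card_2_iff)

lemma red_props:
  assumes Ze: "Z \<inter> e = {}" and ce: "card e = 2" and e': "e' = {} \<or> e' = e"
    and M: "M \<in> Match (Z \<union> e')"
  shows "red e M \<in> Match Z \<and>
    (\<forall>S\<in>red e M. S \<notin> M \<longrightarrow> (\<exists>P1 P2. P1 \<in> M \<and> P2 \<in> M \<and> P1 \<inter> P2 = {} \<and> P1 \<union> P2 = S \<union> e))"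
proof -
  obtain i j where e: "e = {i, j}" "i \<noteq> j" using ce[unfolded card_2_iff] by blast
  have Ma1: "\<forall>S\<in>M. card S = 2" and Ma2: "\<Union>M = Z \<union> e'"
    and Ma3: "\<forall>S\<in>M. \<forall>T\<in>M. S \<noteq> T \<longrightarrow> S \<inter> T = {}"
    using M unfolding Match_def by auto
  show ?thesis using e'
  proof
    assume e0: "e' = {}"
    have "\<forall>S\<in>M. S \<inter> e = {}" using Ma2 Ze e0 by blast
    then have r1: "{S\<in>M. S \<inter> e \<noteq> {}} = {}" and r2: "{S\<in>M. S \<inter> e = {}} = M" by auto
    have "red e M = M" unfolding red_def r1 r2 by simp
    then show ?thesis using M e0 by simp
  next
    assume e1: "e' = e"
    have "i \<in> \<Union>M" "j \<in> \<Union>M" using Ma2 e1 e by auto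
    then obtain Pi Pj where Pi: "Pi \<in> M" "i \<in> Pi" and Pj: "Pj \<in> M" "j \<in> Pj" by blast
    have Q: "{S\<in>M. S \<inter> e \<noteq> {}} = {Pi, Pj}"
    proof
      show "{S\<in>M. S \<inter> e \<noteq> {}} \<subseteq> {Pi, Pj}"
      proof
        fix S assume S: "S \<in> {S\<in>M. S \<inter> e \<noteq> {}}"
        then have "i \<in> S \<or> j \<in> S" using e by auto
        then show "S \<in> {Pi, Pj}" using S Pi Pj Ma3 by blast
      qed
      show "{Pi, Pj} \<subseteq> {S\<in>M. S \<inter> e \<noteq> {}}" using Pi Pj e by auto
    qed
    have sub: "S \<subseteq> Z \<union> e" if "S \<in> M" for S using that Ma2 e1 by blast
    show ?thesis
    proof (cases "Pi = Pj")
      case True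
      have Pie: "Pi = e" using card2_eq[of Pi i j] Ma1 Pi Pj True e by auto
      have "\<Union>{S\<in>M. S \<inter> e \<noteq> {}} - e = {}" using Q True Pie by simp
      then have R: "red e M = {S\<in>M. S \<inter> e = {}}" unfolding red_def by simp
      have U: "\<Union>{S\<in>M. S \<inter> e = {}} = Z"
      proof
        show "\<Union>{S\<in>M. S \<inter> e = {}} \<subseteq> Z" using sub by blast
        show "Z \<subseteq> \<Union>{S\<in>M. S \<inter> e = {}}"
        proof
          fix z assume z: "z \<in> Z"
          then obtain S where S: "S \<in> M" "z \<in> S" using Ma2 by blast
          have "S \<inter> e = {}"
          proof (rule ccontr)
            assume "S \<inter> e \<noteq> {}"
            then have "S \<in> {Pi, Pj}" using Q S by blast
            then have "S = e" using True Pie by simp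
            then show False using z S Ze by blast
          qed
          then show "z \<in> \<Union>{S\<in>M. S \<inter> e = {}}" using S by blast
        qed
      qed
      have "red e M \<in> Match Z" unfolding R Match_def using Ma1 Ma3 U by auto
      moreover have "red e M \<subseteq> M" using R by auto
      ultimately show ?thesis by blast
    next
      case False
      have dij: "Pi \<inter> Pj = {}" using Ma3 Pi Pj False by blast
      obtain p where p: "p \<noteq> i" "Pi = {i, p}" using card2_pick[of Pi i] Ma1 Pi by blast
      obtain q where q: "q \<noteq> j" "Pj = {j, q}" using card2_pick[of Pj j] Ma1 Pj by blast
      have pj: "p \<noteq> j" using dij p q by auto
      have qi: "q \<noteq> i" using dij p q by auto
      have pq: "p \<noteq> q" using dij p q by auto
      have pZ: "p \<in> Z" using sub[OF Pi(1)] p pj e by auto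
      have qZ: "q \<in> Z" using sub[OF Pj(1)] q qi e by auto
      have T: "\<Union>{S\<in>M. S \<inter> e \<noteq> {}} - e = {p, q}" using Q p q pj qi e by auto
      then have R: "red e M = {S\<in>M. S \<inter> e = {}} \<union> {{p, q}}" unfolding red_def by simp
      have U: "\<Union>({S\<in>M. S \<inter> e = {}} \<union> {{p, q}}) = Z"
      proof
        show "\<Union>({S\<in>M. S \<inter> e = {}} \<union> {{p, q}}) \<subseteq> Z" using sub pZ qZ by blast
        show "Z \<subseteq> \<Union>({S\<in>M. S \<inter> e = {}} \<union> {{p, q}})"
        proof
          fix z assume z: "z \<in> Z"
          then obtain S where S: "S \<in> M" "z \<in> S" using Ma2 by blast
          show "z \<in> \<Union>({S\<in>M. S \<inter> e = {}} \<union> {{p, q}})"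
          proof (cases "S \<inter> e = {}")
            case True then show ?thesis using S by blast
          next
            case False
            then have "S \<in> {Pi, Pj}" using Q S by blast
            then have "z \<in> {p, q}" using z S p q e Ze by auto
            then show ?thesis by blast
          qed
        qed
      qed
      have disj: "S \<inter> {p, q} = {}" if "S \<in> M" "S \<inter> e = {}" for S
      proof -
        have "S \<noteq> Pi" "S \<noteq> Pj" using that Pi Pj e by auto
        then have "S \<inter> Pi = {}" "S \<inter> Pj = {}" using Ma3 that Pi Pj by auto
        then show ?thesis using p q by auto
      qed
      have "red e M \<in> Match Z" unfolding R Match_def
      proof (intro CollectI conjI ballI impI)
        fix S assume "S \<in> {S\<in>M. S \<inter> e = {}} \<union> {{p, q}}"
        then show "card S = 2" using Ma1 pq by auto
      next
        show "\<Union>({S\<in>M. S \<inter> e = {}} \<union> {{p, q}}) = Z" by (rule U)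
      next
        fix S T assume S: "S \<in> {S\<in>M. S \<inter> e = {}} \<union> {{p, q}}" and T: "T \<in> {S\<in>M. S \<inter> e = {}} \<union> {{p, q}}"
          and ST: "S \<noteq> T"
        show "S \<inter> T = {}"
        proof (cases "S = {p, q}")
          case True
          then have "T \<in> M" "T \<inter> e = {}" using T ST by auto
          then show ?thesis using disj True by blast
        next
          case False
          then have S': "S \<in> M" "S \<inter> e = {}" using S by auto
          show ?thesis
          proof (cases "T = {p, q}")
            case True then show ?thesis using disj S' by blast
          next
            case False
            then have "T \<in> M" using T by auto
            then show ?thesis using Ma3 S' ST by blast
          qed
        qed
      qed
      moreover have "\<forall>S\<in>red e M. S \<notin> M \<longrightarrow> (\<exists>P1 P2. P1 \<in> M \<and> P2 \<in> M \<and> P1 \<inter> P2 = {} \<and> P1 \<union> P2 = S \<union> e)"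
      proof (intro ballI impI)
        fix S assume "S \<in> red e M" "S \<notin> M"
        then have "S = {p, q}" using R by auto
        then have "Pi \<union> Pj = S \<union> e" using p q e by auto
        then show "\<exists>P1 P2. P1 \<in> M \<and> P2 \<in> M \<and> P1 \<inter> P2 = {} \<and> P1 \<union> P2 = S \<union> e"
          using Pi(1) Pj(1) dij by blast
      qed
      ultimately show ?thesis by blast
    qed
  qed
qed
lemma xor_cancel: "(a \<oplus>\<^sub>s P) \<oplus>\<^sub>s (b \<oplus>\<^sub>s P) = a \<oplus>\<^sub>s b"
  by (auto simp: xor_simp)

lemma EWB_inv2:
  assumes B: "EWB J F B" and X: "X \<subseteq> J" and Y: "Y \<subseteq> J" and M: "M \<in> Match (X \<oplus>\<^sub>s Y)"
    and P: "P \<in> M" and PJ: "P \<subseteq> J"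
  shows "B X Y M = B (X \<oplus>\<^sub>s P) (Y \<oplus>\<^sub>s P) M"
  using EWB_inv[OF B X Y M P] .

lemma contract:
  assumes ew: "even_windable J F" and fin: "finite J" and eJ: "e \<subseteq> J" and ce: "card e = 2"
  shows "even_windable (J - e) (\<lambda>x. F x + F (x \<union> e))"
proof -
  obtain B where B: "EWB J F B" using ew ew_iff by blast
  have ene: "e \<noteq> {}" using ce by auto
  have fine: "finite e" using eJ fin finite_subset by blast
  define I where "I Z = Sigma ({{},e} \<times> {{},e}) (\<lambda>cd. Match (Z \<union> (fst cd \<oplus>\<^sub>s snd cd)))" for Z
  define B' where "B' x y M' = (\<Sum>t\<in>{t. t \<in> I (x \<oplus>\<^sub>s y) \<and> red e (snd t) = M'}.
      B (x \<union> fst (fst t)) (y \<union> snd (fst t)) (snd t))" for x y M'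
  have cdx: "c \<oplus>\<^sub>s d = {} \<or> c \<oplus>\<^sub>s d = e" if "c \<in> {{},e}" "d \<in> {{},e}" for c d
    using that by (auto simp: xor_simp)
  have xu: "(x \<union> c) \<oplus>\<^sub>s (y \<union> d) = (x \<oplus>\<^sub>s y) \<union> (c \<oplus>\<^sub>s d)"
    if "x \<inter> e = {}" "y \<inter> e = {}" "c \<subseteq> e" "d \<subseteq> e" for x y c d
    using that by (auto simp: xor_simp)
  have finI: "finite (I Z)" if "finite Z" for Z
    unfolding I_def using that fine
    by (intro finite_SigmaI) (auto intro!: finite_Match simp: xor_simp)
  have redI: "red e (snd t) \<in> Match Z" if "Z \<inter> e = {}" "t \<in> I Z" for Z t
  proof -
    have h: "fst (fst t) \<in> {{},e}" "snd (fst t) \<in> {{},e}" "snd t \<in> Match (Z \<union> (fst (fst t) \<oplus>\<^sub>s snd (fst t)))"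
      using that(2) unfolding I_def by auto
    show ?thesis using red_props[OF that(1) ce cdx[OF h(1,2)] h(3)] by blast
  qed
  have Isub: "snd t \<in> Match ((x \<union> fst (fst t)) \<oplus>\<^sub>s (y \<union> snd (fst t)))"
    "x \<union> fst (fst t) \<subseteq> J" "y \<union> snd (fst t) \<subseteq> J"
    if "t \<in> I (x \<oplus>\<^sub>s y)" "x \<subseteq> J - e" "y \<subseteq> J - e" for x y t
  proof -
    have "fst (fst t) \<in> {{},e}" "snd (fst t) \<in> {{},e}" "snd t \<in> Match ((x \<oplus>\<^sub>s y) \<union> (fst (fst t) \<oplus>\<^sub>s snd (fst t)))"
      using that(1) unfolding I_def by auto
    note h = this
    have "(x \<union> fst (fst t)) \<oplus>\<^sub>s (y \<union> snd (fst t)) = (x \<oplus>\<^sub>s y) \<union> (fst (fst t) \<oplus>\<^sub>s snd (fst t))"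
      by (rule xu) (use that(2,3) h(1,2) in auto)
    then show "snd t \<in> Match ((x \<union> fst (fst t)) \<oplus>\<^sub>s (y \<union> snd (fst t)))"
      using h(3) by simp
    show "x \<union> fst (fst t) \<subseteq> J" "y \<union> snd (fst t) \<subseteq> J"
      using h(1,2) that(2,3) eJ by auto
  qed
  show ?thesis
  proof (rule EWB_intro[where B=B'])
    fix x y M assume x: "x \<subseteq> J - e" and y: "y \<subseteq> J - e" and M: "M \<in> Match (x \<oplus>\<^sub>s y)"
    show "0 \<le> B' x y M" unfolding B'_def
    proof (rule sum_nonneg)
      fix t assume "t \<in> {t. t \<in> I (x \<oplus>\<^sub>s y) \<and> red e (snd t) = M}"
      then have t: "t \<in> I (x \<oplus>\<^sub>s y)" by simp
      show "0 \<le> B (x \<union> fst (fst t)) (y \<union> snd (fst t)) (snd t)"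
        by (rule EWB_nonneg[OF B Isub(2)[OF t x y] Isub(3)[OF t x y] Isub(1)[OF t x y]])
    qed
  next
    fix x y assume x: "x \<subseteq> J - e" and y: "y \<subseteq> J - e"
    define Z where "Z = x \<oplus>\<^sub>s y"
    have xe: "x \<inter> e = {}" "y \<inter> e = {}" using x y by auto
    have Ze: "Z \<inter> e = {}" unfolding Z_def using xe by (auto simp: xor_simp)
    have finZ: "finite Z" unfolding Z_def using x y fin by (auto simp: xor_simp intro: finite_subset)
    have "(F x + F (x \<union> e)) * (F y + F (y \<union> e)) = (\<Sum>c\<in>{{},e}. \<Sum>d\<in>{{},e}. F (x \<union> c) * F (y \<union> d))"
    proof -
      have s2: "(\<Sum>c\<in>{{},e}. g c) = g {} + g e" for g :: "'a set \<Rightarrow> rat" using ene by simp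
      show ?thesis by (simp only: s2) (simp add: algebra_simps)
    qed
    also have "\<dots> = (\<Sum>c\<in>{{},e}. \<Sum>d\<in>{{},e}. \<Sum>M\<in>Match (Z \<union> (c \<oplus>\<^sub>s d)). B (x \<union> c) (y \<union> d) M)"
    proof (intro sum.cong refl)
      fix c d assume c: "c \<in> {{},e}" and d: "d \<in> {{},e}"
      have "F (x \<union> c) * F (y \<union> d) = (\<Sum>M\<in>Match ((x \<union> c) \<oplus>\<^sub>s (y \<union> d)). B (x \<union> c) (y \<union> d) M)"
        by (rule EWB_eq[OF B]) (use x y c d eJ in auto)
      also have "(x \<union> c) \<oplus>\<^sub>s (y \<union> d) = Z \<union> (c \<oplus>\<^sub>s d)"
        unfolding Z_def by (rule xu) (use xe c d in auto)
      finally show "F (x \<union> c) * F (y \<union> d) = (\<Sum>M\<in>Match (Z \<union> (c \<oplus>\<^sub>s d)). B (x \<union> c) (y \<union> d) M)" .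
    qed
    also have "\<dots> = (\<Sum>cd\<in>{{},e} \<times> {{},e}. \<Sum>M\<in>Match (Z \<union> (fst cd \<oplus>\<^sub>s snd cd)). B (x \<union> fst cd) (y \<union> snd cd) M)"
      by (subst sum.cartesian_product) (simp add: case_prod_beta)
    also have "\<dots> = (\<Sum>t\<in>I Z. B (x \<union> fst (fst t)) (y \<union> snd (fst t)) (snd t))"
      unfolding I_def
    proof (subst sum.Sigma)
      show "finite ({{},e} \<times> {{},e})" by simp
      show "\<forall>cd\<in>{{},e} \<times> {{},e}. finite (Match (Z \<union> (fst cd \<oplus>\<^sub>s snd cd)))"
      proof
        fix cd assume "cd \<in> {{},e} \<times> {{},e}"
        then have "fst cd \<oplus>\<^sub>s snd cd \<subseteq> e" by (auto simp: xor_simp)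
        then have "finite (fst cd \<oplus>\<^sub>s snd cd)" using fine finite_subset by blast
        then show "finite (Match (Z \<union> (fst cd \<oplus>\<^sub>s snd cd)))" using finZ finite_Match by blast
      qed
    qed (simp add: case_prod_beta)
    also have "\<dots> = (\<Sum>M'\<in>Match Z. B' x y M')"
      unfolding B'_def Z_def[symmetric]
      by (rule sum.group[symmetric]) (use finI[OF finZ] finite_Match[OF finZ] redI[OF Ze] in auto)
    finally show "(F x + F (x \<union> e)) * (F y + F (y \<union> e)) = (\<Sum>M\<in>Match (x \<oplus>\<^sub>s y). B' x y M)"
      unfolding Z_def .
  next
    fix x y M' S assume x: "x \<subseteq> J - e" and y: "y \<subseteq> J - e" and M': "M' \<in> Match (x \<oplus>\<^sub>s y)"
      and S: "S \<in> M'"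
    define Z where "Z = x \<oplus>\<^sub>s y"
    have xe: "x \<inter> e = {}" "y \<inter> e = {}" using x y by auto
    have Ze: "Z \<inter> e = {}" unfolding Z_def using xe by (auto simp: xor_simp)
    have SZ: "S \<subseteq> Z" using M' S unfolding Match_def Z_def by auto
    have Se: "S \<inter> e = {}" using SZ Ze by auto
    have ZJ: "Z \<subseteq> J" unfolding Z_def using x y by (auto simp: xor_simp)
    define K where "K = {t. t \<in> I Z \<and> red e (snd t) = M'}"
    define \<sigma> where "\<sigma> t = (if S \<in> snd t then t else ((e - fst (fst t), e - snd (fst t)), snd t))" for t :: "('a set \<times> 'a set) \<times> 'a set set"
    have xS: "(x \<oplus>\<^sub>s S) \<oplus>\<^sub>s (y \<oplus>\<^sub>s S) = Z" unfolding Z_def by (rule xor_cancel)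
    have xSJ: "x \<oplus>\<^sub>s S \<subseteq> J - e" "y \<oplus>\<^sub>s S \<subseteq> J - e" using x y SZ ZJ Se by (auto simp: xor_simp)
    have mem: "fst (fst t) \<in> {{},e} \<and> snd (fst t) \<in> {{},e} \<and> snd t \<in> Match (Z \<union> (fst (fst t) \<oplus>\<^sub>s snd (fst t))) \<and> red e (snd t) = M'"
      if "t \<in> K" for t using that unfolding K_def I_def by auto
    have cmp: "e - c \<in> {{},e}" if "c \<in> {{},e}" for c using that by auto
    have cmpx: "(e - c) \<oplus>\<^sub>s (e - d) = c \<oplus>\<^sub>s d" if "c \<in> {{},e}" "d \<in> {{},e}" for c d
      using that by (auto simp: xor_simp)
    have sK: "\<sigma> t \<in> K" if "t \<in> K" for t
      using mem[OF that] that cmp cmpx unfolding \<sigma>_def K_def I_def by auto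
    have ss: "\<sigma> (\<sigma> t) = t" if "t \<in> K" for t
    proof -
      have "fst (fst t) \<subseteq> e" "snd (fst t) \<subseteq> e" using mem[OF that] by auto
      then show ?thesis unfolding \<sigma>_def by (auto simp: double_diff prod_eq_iff)
    qed
    have trm: "B ((x \<oplus>\<^sub>s S) \<union> fst (fst (\<sigma> t))) ((y \<oplus>\<^sub>s S) \<union> snd (fst (\<sigma> t))) (snd (\<sigma> t))
        = B (x \<union> fst (fst t)) (y \<union> snd (fst t)) (snd t)" if t: "t \<in> K" for t
    proof -
      obtain c d M where tt: "t = ((c, d), M)" by (metis prod.collapse)
      have c: "c \<in> {{},e}" and d: "d \<in> {{},e}" and MM: "M \<in> Match (Z \<union> (c \<oplus>\<^sub>s d))"
        and rM: "red e M = M'" using mem[OF t] tt by auto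
      have Mx: "M \<in> Match ((x \<union> c) \<oplus>\<^sub>s (y \<union> d))" using MM xu[OF xe, of c d] c d unfolding Z_def by auto
      have xcJ: "x \<union> c \<subseteq> J" "y \<union> d \<subseteq> J" using x y c d eJ by auto
      show ?thesis
      proof (cases "S \<in> M")
        case True
        have s: "\<sigma> t = t" unfolding \<sigma>_def using True tt by simp
        have "(x \<oplus>\<^sub>s S) \<union> c = (x \<union> c) \<oplus>\<^sub>s S" "(y \<oplus>\<^sub>s S) \<union> d = (y \<union> d) \<oplus>\<^sub>s S"
          using Se c d by (auto simp: xor_simp)
        then show ?thesis using EWB_inv[OF B xcJ Mx True] s tt by simp
      next
        case False
        have s: "\<sigma> t = ((e - c, e - d), M)" unfolding \<sigma>_def using False tt by simp
        have "S \<in> red e M" using rM S by simp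
        then obtain P1 P2 where P: "P1 \<in> M" "P2 \<in> M" "P1 \<inter> P2 = {}" "P1 \<union> P2 = S \<union> e"
          using red_props[OF Ze ce cdx[OF c d] MM] False by blast
        have MJ: "\<Union>M \<subseteq> J" using MM ZJ eJ c d unfolding Match_def by (auto simp: xor_simp)
        have P1J: "P1 \<subseteq> J" using P(1) MJ by blast
        have x1J: "(x \<union> c) \<oplus>\<^sub>s P1 \<subseteq> J" "(y \<union> d) \<oplus>\<^sub>s P1 \<subseteq> J" using xcJ P1J by (auto simp: xor_simp)
        have Mx1: "M \<in> Match (((x \<union> c) \<oplus>\<^sub>s P1) \<oplus>\<^sub>s ((y \<union> d) \<oplus>\<^sub>s P1))" using Mx xor_cancel by metis
        have "B (x \<union> c) (y \<union> d) M = B ((x \<union> c) \<oplus>\<^sub>s P1) ((y \<union> d) \<oplus>\<^sub>s P1) M"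
          by (rule EWB_inv[OF B xcJ Mx P(1)])
        also have "\<dots> = B (((x \<union> c) \<oplus>\<^sub>s P1) \<oplus>\<^sub>s P2) (((y \<union> d) \<oplus>\<^sub>s P1) \<oplus>\<^sub>s P2) M"
          by (rule EWB_inv[OF B x1J Mx1 P(2)])
        also have "((x \<union> c) \<oplus>\<^sub>s P1) \<oplus>\<^sub>s P2 = (x \<oplus>\<^sub>s S) \<union> (e - c)"
        proof -
          have "((x \<union> c) \<oplus>\<^sub>s P1) \<oplus>\<^sub>s P2 = (x \<union> c) \<oplus>\<^sub>s (P1 \<union> P2)" using P(3) by (auto simp: xor_simp)
          also have "\<dots> = (x \<oplus>\<^sub>s S) \<union> (e - c)" using P(4) xe Se c by (auto simp: xor_simp)
          finally show ?thesis .
        qed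
        also have "((y \<union> d) \<oplus>\<^sub>s P1) \<oplus>\<^sub>s P2 = (y \<oplus>\<^sub>s S) \<union> (e - d)"
        proof -
          have "((y \<union> d) \<oplus>\<^sub>s P1) \<oplus>\<^sub>s P2 = (y \<union> d) \<oplus>\<^sub>s (P1 \<union> P2)" using P(3) by (auto simp: xor_simp)
          also have "\<dots> = (y \<oplus>\<^sub>s S) \<union> (e - d)" using P(4) xe Se d by (auto simp: xor_simp)
          finally show ?thesis .
        qed
        finally show ?thesis using s tt by simp
      qed
    qed
    have "B' x y M' = (\<Sum>t\<in>K. B (x \<union> fst (fst t)) (y \<union> snd (fst t)) (snd t))"
      unfolding B'_def K_def Z_def ..
    also have "\<dots> = (\<Sum>t\<in>K. B ((x \<oplus>\<^sub>s S) \<union> fst (fst t)) ((y \<oplus>\<^sub>s S) \<union> snd (fst t)) (snd t))"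
      by (rule sum.reindex_bij_witness[where i=\<sigma> and j=\<sigma>]) (use ss sK trm in auto)
    also have "\<dots> = B' (x \<oplus>\<^sub>s S) (y \<oplus>\<^sub>s S) M'"
      unfolding B'_def K_def xS ..
    finally show "B' x y M' = B' (x \<oplus>\<^sub>s S) (y \<oplus>\<^sub>s S) M'" .
  qed
qed
lemma tensor_all:
  assumes fV: "finite W" and WV: "W \<subseteq> V"
    and dis: "\<forall>v\<in>V. \<forall>w\<in>V. v \<noteq> w \<longrightarrow> Jv v \<inter> Jv w = {}"
    and fin: "\<forall>v\<in>V. finite (Jv v)"
    and ew: "\<forall>v\<in>V. even_windable (Jv v) (F v)"
  shows "even_windable (\<Union>v\<in>W. Jv v) (\<lambda>x. \<Prod>v\<in>W. F v (x \<inter> Jv v))"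
  using fV WV
proof (induction W rule: finite_subset_induct')
  case empty
  show ?case using ew_empty by simp
next
  case (insert v W)
  have d: "Jv v \<inter> (\<Union>w\<in>W. Jv w) = {}"
  proof -
    have "Jv v \<inter> Jv w = {}" if "w \<in> W" for w
    proof -
      have "w \<in> V" "w \<noteq> v" using that insert.hyps by auto
      then show ?thesis using dis insert.hyps(2) by blast
    qed
    then show ?thesis by blast
  qed
  have f2: "finite (\<Union>w\<in>W. Jv w)" using insert fin by blast
  have t: "even_windable (Jv v \<union> (\<Union>w\<in>W. Jv w))
      (\<lambda>x. F v (x \<inter> Jv v) * (\<Prod>w\<in>W. F w (x \<inter> (\<Union>w\<in>W. Jv w) \<inter> Jv w)))"
    by (rule tensor[OF _ insert.IH d]) (use ew fin insert f2 in auto)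
  show ?case
  proof (rule ew_cong)
    show "even_windable (\<Union>v\<in>insert v W. Jv v)
      (\<lambda>x. F v (x \<inter> Jv v) * (\<Prod>w\<in>W. F w (x \<inter> (\<Union>w\<in>W. Jv w) \<inter> Jv w)))" using t by simp
  next
    fix x
    have "(\<Prod>w\<in>W. F w (x \<inter> (\<Union>w\<in>W. Jv w) \<inter> Jv w)) = (\<Prod>w\<in>W. F w (x \<inter> Jv w))"
    proof (rule prod.cong)
      fix w assume "w \<in> W"
      then have "x \<inter> (\<Union>w\<in>W. Jv w) \<inter> Jv w = x \<inter> Jv w" by blast
      then show "F w (x \<inter> (\<Union>w\<in>W. Jv w) \<inter> Jv w) = F w (x \<inter> Jv w)" by simp
    qed simp
    then show "F v (x \<inter> Jv v) * (\<Prod>w\<in>W. F w (x \<inter> (\<Union>w\<in>W. Jv w) \<inter> Jv w)) = (\<Prod>v\<in>insert v W. F v (x \<inter> Jv v))"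
      using insert by simp
  qed
qed

definition Cset :: "'j set \<Rightarrow> 'j set set \<Rightarrow> 'j set \<Rightarrow> 'j set set" where
  "Cset J E0 x = {x'. x' \<subseteq> J \<and> x' - \<Union>E0 = x \<and> (\<forall>P\<in>E0. P \<subseteq> x' \<or> P \<inter> x' = {})}"

lemma Cset_insert:
  assumes x: "x \<subseteq> J - \<Union>E0 - e" and eJ: "e \<subseteq> J" and ed: "e \<inter> \<Union>E0 = {}" and ene: "e \<noteq> {}"
  shows "Cset J (insert e E0) x = Cset J E0 x \<union> Cset J E0 (x \<union> e)"
    "Cset J E0 x \<inter> Cset J E0 (x \<union> e) = {}"
proof -
  show "Cset J E0 x \<inter> Cset J E0 (x \<union> e) = {}"
  proof -
    have "x \<noteq> x \<union> e" using x ene by blast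
    then show ?thesis unfolding Cset_def by auto
  qed
  show "Cset J (insert e E0) x = Cset J E0 x \<union> Cset J E0 (x \<union> e)"
  proof
    show "Cset J (insert e E0) x \<subseteq> Cset J E0 x \<union> Cset J E0 (x \<union> e)"
    proof
      fix x' assume "x' \<in> Cset J (insert e E0) x"
      then have a: "x' \<subseteq> J" "x' - \<Union>E0 - e = x" "e \<subseteq> x' \<or> e \<inter> x' = {}"
        "\<forall>P\<in>E0. P \<subseteq> x' \<or> P \<inter> x' = {}"
      proof -
        have "x' - \<Union>(insert e E0) = x' - \<Union>E0 - e" by blast
        then show "x' \<subseteq> J" "x' - \<Union>E0 - e = x" "e \<subseteq> x' \<or> e \<inter> x' = {}"
        "\<forall>P\<in>E0. P \<subseteq> x' \<or> P \<inter> x' = {}" using \<open>x' \<in> Cset J (insert e E0) x\<close> unfolding Cset_def by auto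
      qed
      from a(3) show "x' \<in> Cset J E0 x \<union> Cset J E0 (x \<union> e)"
      proof
        assume "e \<subseteq> x'"
        then have "x' - \<Union>E0 = x \<union> e" using a(2) ed by blast
        then show ?thesis using a unfolding Cset_def by blast
      next
        assume "e \<inter> x' = {}"
        then have "x' - \<Union>E0 = x" using a(2) by blast
        then show ?thesis using a unfolding Cset_def by blast
      qed
    qed
    show "Cset J E0 x \<union> Cset J E0 (x \<union> e) \<subseteq> Cset J (insert e E0) x"
    proof
      fix x' assume "x' \<in> Cset J E0 x \<union> Cset J E0 (x \<union> e)"
      then have a: "x' \<subseteq> J" "x' - \<Union>E0 = x \<or> x' - \<Union>E0 = x \<union> e"
        "\<forall>P\<in>E0. P \<subseteq> x' \<or> P \<inter> x' = {}" unfolding Cset_def by auto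
      have xe: "x \<inter> e = {}" using x by blast
      from a(2) have "x' - (\<Union>E0 \<union> e) = x \<and> (e \<subseteq> x' \<or> e \<inter> x' = {})"
      proof
        assume h: "x' - \<Union>E0 = x"
        then have "e \<inter> x' = {}" using xe ed by blast
        then show ?thesis using h xe by blast
      next
        assume h: "x' - \<Union>E0 = x \<union> e"
        then have "e \<subseteq> x'" by blast
        then show ?thesis using h xe by blast
      qed
      then show "x' \<in> Cset J (insert e E0) x" using a unfolding Cset_def by auto
    qed
  qed
qed

lemma contract_all:
  assumes fin: "finite J" and EM: "E \<in> Match (J - A)" and AJ: "A \<subseteq> J"
    and ewG: "even_windable J G" and E0E: "E0 \<subseteq> E"
  shows "even_windable (J - \<Union>E0) (\<lambda>x. \<Sum>x'\<in>Cset J E0 x. G x')"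
proof -
  have Ea: "\<forall>S\<in>E. card S = 2" "\<Union>E = J - A" "\<forall>S\<in>E. \<forall>T\<in>E. S \<noteq> T \<longrightarrow> S \<inter> T = {}"
    using EM unfolding Match_def by auto
  have "finite (\<Union>E)" using Ea(2) fin by simp
  then have fE: "finite E" by (rule finite_UnionD)
  have fE0: "finite E0" using fE E0E finite_subset by blast
  show ?thesis using fE0 E0E
  proof (induction E0 rule: finite_subset_induct')
    case empty
    show ?case
    proof (rule ew_cong)
      show "even_windable (J - \<Union>{}) G" using ewG by simp
      fix x assume x: "x \<subseteq> J - \<Union>{}"
      have "Cset J {} x = {x}" unfolding Cset_def using x by auto
      then show "G x = (\<Sum>x'\<in>Cset J {} x. G x')" by simp
    qed
  next
    case (insert e E0)
    have eE: "e \<in> E" using insert.hyps(2) .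
    have eJ: "e \<subseteq> J" using eE Ea(2) by blast
    have ed: "e \<inter> \<Union>E0 = {}"
    proof -
      have "e \<inter> P = {}" if "P \<in> E0" for P
      proof -
        have "P \<in> E" "P \<noteq> e" using that insert.hyps(3,4) by auto
        then show ?thesis using Ea(3) eE by blast
      qed
      then show ?thesis by blast
    qed
    have ce: "card e = 2" using eE Ea(1) by blast
    have ene: "e \<noteq> {}" using ce by auto
    have e2: "e \<subseteq> J - \<Union>E0" using eJ ed by blast
    have c: "even_windable (J - \<Union>E0 - e) (\<lambda>x. (\<Sum>x'\<in>Cset J E0 x. G x') + (\<Sum>x'\<in>Cset J E0 (x \<union> e). G x'))"
      by (rule contract[OF insert.IH _ e2 ce]) (use fin in simp)
    show ?case
    proof (rule ew_cong)
      show "even_windable (J - \<Union>(insert e E0)) (\<lambda>x. (\<Sum>x'\<in>Cset J E0 x. G x') + (\<Sum>x'\<in>Cset J E0 (x \<union> e). G x'))"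
      proof -
        have "J - \<Union>(insert e E0) = J - \<Union>E0 - e" by blast
        then show ?thesis using c by simp
      qed
    next
      fix x assume "x \<subseteq> J - \<Union>(insert e E0)"
      then have x: "x \<subseteq> J - \<Union>E0 - e" by blast
      have f1: "finite (Cset J E0 y)" for y
      proof -
        have "Cset J E0 y \<subseteq> Pow J" unfolding Cset_def by auto
        then show ?thesis using fin finite_subset by blast
      qed
      show "(\<Sum>x'\<in>Cset J E0 x. G x') + (\<Sum>x'\<in>Cset J E0 (x \<union> e). G x') = (\<Sum>x'\<in>Cset J (insert e E0) x. G x')"
        unfolding Cset_insert(1)[OF x eJ ed ene]
        by (rule sum.union_disjoint[symmetric]) (use f1 Cset_insert(2)[OF x eJ ed ene] in auto)
    qed
  qed
qed

theorem lemma7: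
  fixes J :: "'j set" and V :: "'v set" and Jv :: "'v \<Rightarrow> 'j set"
    and A :: "'j set" and E :: "'j set set" and F :: "'v \<Rightarrow> 'j set \<Rightarrow> rat"
  assumes "circuit J V Jv A E F"
    and "\<forall>v\<in>V. even_windable (Jv v) (F v)"
  shows "even_windable A (signature J V Jv A E F)"
proof -
  have c: "finite J" "finite V" "\<forall>v\<in>V. Jv v \<subseteq> J" "(\<Union>v\<in>V. Jv v) = J"
     "\<forall>v\<in>V. \<forall>w\<in>V. v \<noteq> w \<longrightarrow> Jv v \<inter> Jv w = {}" "A \<subseteq> J" "E \<in> Match (J - A)"
    using assms(1) unfolding circuit_def by auto
  have finv: "\<forall>v\<in>V. finite (Jv v)" using c(1,3) finite_subset by blast
  have G: "even_windable J (\<lambda>x. \<Prod>v\<in>V. F v (x \<inter> Jv v))"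
    using tensor_all[OF c(2) subset_refl c(5) finv assms(2)] c(4) by simp
  have H: "even_windable (J - \<Union>E) (\<lambda>x. \<Sum>x'\<in>Cset J E x. (\<Prod>v\<in>V. F v (x' \<inter> Jv v)))"
    by (rule contract_all[OF c(1) c(7) c(6) G subset_refl])
  have Ea: "\<forall>S\<in>E. card S = 2" "\<Union>E = J - A"
    using c(7) unfolding Match_def by auto
  have JA: "J - \<Union>E = A" using c(6) by (auto simp: Ea(2))
  show ?thesis
  proof (rule ew_cong)
    show "even_windable A (\<lambda>x. \<Sum>x'\<in>Cset J E x. (\<Prod>v\<in>V. F v (x' \<inter> Jv v)))" using H JA by simp
  next
    fix x assume x: "x \<subseteq> A"
    have "Cset J E x = {x' \<in> assignments J E. x' \<inter> A = x}"
    proof (rule set_eqI)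
      fix x'
      have eq1: "x' \<subseteq> J \<Longrightarrow> x' - \<Union>E = x' \<inter> A" using c(6) by (auto simp: Ea(2))
      have eq2: "(\<forall>P\<in>E. P \<subseteq> x' \<or> P \<inter> x' = {}) \<longleftrightarrow> (\<forall>i j. {i, j} \<in> E \<longrightarrow> (i \<in> x' \<longleftrightarrow> j \<in> x'))"
      proof
        assume h: "\<forall>P\<in>E. P \<subseteq> x' \<or> P \<inter> x' = {}"
        show "\<forall>i j. {i, j} \<in> E \<longrightarrow> (i \<in> x' \<longleftrightarrow> j \<in> x')"
        proof (intro allI impI)
          fix i j assume ij: "{i, j} \<in> E"
          have "{i, j} \<subseteq> x' \<or> {i, j} \<inter> x' = {}" using bspec[OF h ij] .
          then show "i \<in> x' \<longleftrightarrow> j \<in> x'" by auto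
        qed
      next
        assume h: "\<forall>i j. {i, j} \<in> E \<longrightarrow> (i \<in> x' \<longleftrightarrow> j \<in> x')"
        show "\<forall>P\<in>E. P \<subseteq> x' \<or> P \<inter> x' = {}"
        proof
          fix P assume P: "P \<in> E"
          then have "card P = 2" using Ea(1) by blast
          then obtain i j where "P = {i, j}" unfolding card_2_iff by blast
          then show "P \<subseteq> x' \<or> P \<inter> x' = {}" using h P by blast
        qed
      qed
      show "x' \<in> Cset J E x \<longleftrightarrow> x' \<in> {x' \<in> assignments J E. x' \<inter> A = x}"
        unfolding Cset_def assignments_def using eq1 eq2 by auto
    qed
    then show "(\<Sum>x'\<in>Cset J E x. (\<Prod>v\<in>V. F v (x' \<inter> Jv v))) = signature J V Jv A E F x"
      unfolding signature_def wt_def by simp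
  qed
qed

end
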